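(* Let $G$ be a simple directed graph on $[n]$ and let $\sigma\subseteq[n]$. (1) If $\sigma$ is not a clique of $G$, then $\sigma$ is not a stable motif of $W(G,\varepsilon,\delta)$ for any legal $\varepsilon,\delta$ such that $$\delta > \frac{\varepsilon}{1-\varepsilon}\,(|\sigma|^2-|\sigma|-1).$$ (2) If the induced subgraph $G|_\sigma$ has maximum in-degree $d^{in}_{\max}=d<|\sigma|-1$, then $\sigma$ is not a stable motif of $W(G,\varepsilon,\delta)$ for any legal $\varepsilon,\delta$ such that $$\delta>\frac{\varepsilon d}{|\sigma|-1-d}.$$
   Context: Let $G$ be a simple directed graph (no self-loops, no multiple edges) on vertex set $[n]=\{1,\dots,n\}$; $j\to i$ denotes an edge from $j$ to $i$. Parameters $\varepsilon,\delta$ are in the legal range if $\delta>0$ and $0<\varepsilon<\frac{\delta}{\delta+1}$. The combinatorial threshold-linear network (CTLN) $W=W(G,\varepsilon,\delta)$ is the $n\times n$ matrix with $W_{ii}=0$, $W_{ij}=-1+\varepsilon$ if $j\to i$ in $G$, and $W_{ij}=-1-\delta$ if $i\ne j$ and $j\not\to i$; its dynamics are $\dot x_i=-x_i+[\sum_j W_{ij}x_j+\theta]_+$ with $\theta>0$. CTLNs are assumed nondegenerate: $\det(I-W_\sigma)\neq0$ for all $\sigma$ and all Cramer's-rule determinants of $(I-W_\sigma)x=\theta 1_\sigma$ are nonzero. For $\sigma\subseteq[n]$, $W_\sigma$ is the principal submatrix indexed by $\sigma$ (the CTLN of the induced subgraph $G|_\sigma$). $\sigma$ is a permitted motif if $W_\sigma$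 has a fixed point with full support $\sigma$, i.e. $\theta(I-W_\sigma)^{-1}1_\sigma$ has all entries positive; $\sigma$ is a stable motif if it is permitted and all eigenvalues of $I-W_\sigma$ have positive real part. A clique is a set of nodes that are pairwise bidirectionally connected (singletons are cliques). In-degrees in $G|_\sigma$ count edges from nodes of $\sigma$. *)

theory Defs
  imports Complex_Main "Jordan_Normal_Form.Determinant" "Jordan_Normal_Form.Char_Poly"
begin

(* A directed graph on [n] = {1..n} is a relation G :: nat => nat => bool,
   where  G j i  means the edge  j -> i. *)

definition simple_digraph :: "nat \<Rightarrow> (nat \<Rightarrow> nat \<Rightarrow> bool) \<Rightarrow> bool" where
  "simple_digraph n G \<longleftrightarrow> (\<forall>i\<in>{1..n}. \<not> G i i)"

definition legal_params :: "real \<Rightarrow> real \<Rightarrow> bool" where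
  "legal_params \<epsilon> \<delta> \<longleftrightarrow> \<delta> > 0 \<and> 0 < \<epsilon> \<and> \<epsilon> < \<delta> / (\<delta> + 1)"

definition ctln :: "(nat \<Rightarrow> nat \<Rightarrow> bool) \<Rightarrow> real \<Rightarrow> real \<Rightarrow> nat \<Rightarrow> nat \<Rightarrow> real" where
  "ctln G \<epsilon> \<delta> i j = (if i = j then 0 else if G j i then -1 + \<epsilon> else -1 - \<delta>)"

definition ctln_sub :: "(nat \<Rightarrow> nat \<Rightarrow> bool) \<Rightarrow> real \<Rightarrow> real \<Rightarrow> nat set \<Rightarrow> real mat" where
  "ctln_sub G \<epsilon> \<delta> \<sigma> =
     (let s = sorted_list_of_set \<sigma>
      in mat (card \<sigma>) (card \<sigma>) (\<lambda>(i, j). ctln G \<epsilon> \<delta> (s ! i) (s ! j)))"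

definition IminusW :: "(nat \<Rightarrow> nat \<Rightarrow> bool) \<Rightarrow> real \<Rightarrow> real \<Rightarrow> nat set \<Rightarrow> real mat" where
  "IminusW G \<epsilon> \<delta> \<sigma> = 1\<^sub>m (card \<sigma>) - ctln_sub G \<epsilon> \<delta> \<sigma>"

(* nondegeneracy: det(I - W_tau) <> 0 for all tau, and all Cramer's-rule determinants of
   (I - W_tau) x = theta 1_tau are nonzero *)
definition nondegenerate :: "nat \<Rightarrow> (nat \<Rightarrow> nat \<Rightarrow> bool) \<Rightarrow> real \<Rightarrow> real \<Rightarrow> real \<Rightarrow> bool" where
  "nondegenerate n G \<epsilon> \<delta> \<theta> \<longleftrightarrow>
     (\<forall>\<tau>. \<tau> \<subseteq> {1..n} \<longrightarrow>
        det (IminusW G \<epsilon> \<delta> \<tau>) \<noteq> 0 \<and>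
        (\<forall>k < card \<tau>.
           det (mat (card \<tau>) (card \<tau>)
                 (\<lambda>(i, j). if j = k then \<theta> else IminusW G \<epsilon> \<delta> \<tau> $$ (i, j))) \<noteq> 0))"

(* fixed point of the TLN  dx/dt = -x + [W x + theta]_+  with matrix W_sigma *)
definition fixed_point_sub ::
  "(nat \<Rightarrow> nat \<Rightarrow> bool) \<Rightarrow> real \<Rightarrow> real \<Rightarrow> real \<Rightarrow> nat set \<Rightarrow> real vec \<Rightarrow> bool" where
  "fixed_point_sub G \<epsilon> \<delta> \<theta> \<sigma> x \<longleftrightarrow>
     x \<in> carrier_vec (card \<sigma>) \<and>
     (\<forall>i < card \<sigma>. x $ i = max 0 ((ctln_sub G \<epsilon> \<delta> \<sigma> *\<^sub>v x) $ i + \<theta>))"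

definition permitted_motif :: "(nat \<Rightarrow> nat \<Rightarrow> bool) \<Rightarrow> real \<Rightarrow> real \<Rightarrow> real \<Rightarrow> nat set \<Rightarrow> bool" where
  "permitted_motif G \<epsilon> \<delta> \<theta> \<sigma> \<longleftrightarrow>
     (\<exists>x. fixed_point_sub G \<epsilon> \<delta> \<theta> \<sigma> x \<and> (\<forall>i < card \<sigma>. x $ i > 0))"

definition stable_motif :: "(nat \<Rightarrow> nat \<Rightarrow> bool) \<Rightarrow> real \<Rightarrow> real \<Rightarrow> real \<Rightarrow> nat set \<Rightarrow> bool" where
  "stable_motif G \<epsilon> \<delta> \<theta> \<sigma> \<longleftrightarrow>
     permitted_motif G \<epsilon> \<delta> \<theta> \<sigma> \<and>
     (\<forall>z::complex. eigenvalue (map_mat complex_of_real (IminusW G \<epsilon> \<delta> \<sigma>)) z \<longrightarrow> Re z > 0)"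

definition is_clique :: "(nat \<Rightarrow> nat \<Rightarrow> bool) \<Rightarrow> nat set \<Rightarrow> bool" where
  "is_clique G \<sigma> \<longleftrightarrow> (\<forall>i\<in>\<sigma>. \<forall>j\<in>\<sigma>. i \<noteq> j \<longrightarrow> G i j \<and> G j i)"

definition in_degree_sub :: "(nat \<Rightarrow> nat \<Rightarrow> bool) \<Rightarrow> nat set \<Rightarrow> nat \<Rightarrow> nat" where
  "in_degree_sub G \<sigma> i = card {j \<in> \<sigma>. j \<noteq> i \<and> G j i}"

definition max_in_degree_sub :: "(nat \<Rightarrow> nat \<Rightarrow> bool) \<Rightarrow> nat set \<Rightarrow> nat" where
  "max_in_degree_sub G \<sigma> = Max (in_degree_sub G \<sigma> ` \<sigma>)"

end

theory Submission
  imports Defs "Jordan_Normal_Form.Schur_Decomposition" "Jordan_Normal_Form.Spectral_Radius"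
begin
definition tr :: "'a::comm_ring_1 mat \<Rightarrow> 'a" where
  "tr M = (\<Sum>i<dim_row M. M $$ (i,i))"

lemma tr_comm:
  fixes P B :: "'a::comm_ring_1 mat"
  assumes "P \<in> carrier_mat n n" "B \<in> carrier_mat n n"
  shows "tr (P * B) = tr (B * P)"
proof -
  have "tr (P * B) = (\<Sum>i<n. \<Sum>j<n. P $$ (i,j) * B $$ (j,i))"
    using assms by (auto simp: tr_def scalar_prod_def intro!: sum.cong simp: atLeast0LessThan)
  also have "\<dots> = (\<Sum>j<n. \<Sum>i<n. B $$ (j,i) * P $$ (i,j))"
    by (subst sum.swap) (simp add: mult.commute)
  also have "\<dots> = tr (B * P)"
    using assms by (auto simp: tr_def scalar_prod_def intro!: sum.cong simp: atLeast0LessThan)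
  finally show ?thesis .
qed

lemma tr_sim:
  fixes A B P Q :: "'a::comm_ring_1 mat"
  assumes "A \<in> carrier_mat n n" "similar_mat_wit A B P Q"
  shows "tr A = tr B"
proof -
  note d = similar_mat_witD2[OF assms]
  have "tr A = tr (P * (B * Q))" using d by (simp add: assoc_mult_mat[of P n n B n Q n])
  also have "\<dots> = tr ((B * Q) * P)" using d by (intro tr_comm[of _ n]) auto
  also have "\<dots> = tr B" using d by (simp add: assoc_mult_mat[of B n n Q n P n])
  finally show ?thesis .
qed

lemma sim_sq:
  fixes A B P Q :: "'a::comm_ring_1 mat"
  assumes "A \<in> carrier_mat n n" "similar_mat_wit A B P Q"
  shows "similar_mat_wit (A * A) (B * B) P Q"
proof -
  note d = similar_mat_witD2[OF assms]
  have "similar_mat_wit (A ^\<^sub>m 2) (B ^\<^sub>m 2) P Q" by (rule similar_mat_wit_pow[OF assms(2)])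
  moreover have "A ^\<^sub>m 2 = A * A" using d by (simp add: numeral_2_eq_2)
  moreover have "B ^\<^sub>m 2 = B * B" using d by (simp add: numeral_2_eq_2)
  ultimately show ?thesis by simp
qed

lemma eig_list:
  fixes M :: "complex mat"
  assumes M: "M \<in> carrier_mat n n"
  shows "\<exists>es. length es = n \<and> (\<forall>e. eigenvalue M e \<longleftrightarrow> e \<in> set es) \<and> tr M = sum_list es
     \<and> tr (M * M) = sum_list (map (\<lambda>x. x * x) es)"
proof -
  obtain es where cp: "char_poly M = (\<Prod>a\<leftarrow>es. [:- a, 1:])" and len: "length es = n"
    using char_poly_factorized[OF M] by blast
  obtain B P Q where sd: "schur_decomposition M es = (B,P,Q)" by (cases "schur_decomposition M es") auto
  from schur_decomposition[OF M cp sd] have sim: "similar_mat_wit M B P Q"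
    and ut: "upper_triangular B" and dg: "diag_mat B = es" by auto
  note d = similar_mat_witD2[OF M sim]
  have Bc: "B \<in> carrier_mat n n" using d by auto
  have ev: "eigenvalue M e \<longleftrightarrow> e \<in> set es" for e
  proof -
    have "eigenvalue M e \<longleftrightarrow> poly (char_poly M) e = 0" by (rule eigenvalue_root_char_poly[OF M])
    also have "\<dots> \<longleftrightarrow> e \<in> set es" unfolding cp
      by (induct es) auto
    finally show ?thesis .
  qed
  have "tr M = tr B" by (rule tr_sim[OF M sim])
  also have "\<dots> = sum_list es" unfolding dg[symmetric] tr_def diag_mat_def
    by (simp add: sum_list_sum_nth atLeast0LessThan)
  finally have t1: "tr M = sum_list es" .
  have "tr (M * M) = tr (B * B)" using M by (intro tr_sim[OF _ sim_sq[OF M sim]]) auto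
  also have "\<dots> = (\<Sum>i<n. B $$ (i,i) * B $$ (i,i))"
    unfolding tr_def
  proof (rule sum.cong)
    fix i assume i: "i \<in> {..<n}"
    have "(B * B) $$ (i,i) = (\<Sum>j<n. B $$ (i,j) * B $$ (j,i))"
      using Bc i by (simp add: scalar_prod_def atLeast0LessThan)
    also have "\<dots> = (\<Sum>j\<in>{i}. B $$ (i,j) * B $$ (j,i))"
    proof (rule sum.mono_neutral_right)
      show "\<forall>j\<in>{..<n} - {i}. B $$ (i,j) * B $$ (j,i) = 0"
      proof
        fix j assume j: "j \<in> {..<n} - {i}"
        show "B $$ (i,j) * B $$ (j,i) = 0"
        proof (cases "j < i")
          case True thus ?thesis using ut Bc i unfolding upper_triangular_def by auto
        next
          case False thus ?thesis using ut Bc j unfolding upper_triangular_def by auto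
        qed
      qed
    qed (use i in auto)
    finally show "(B * B) $$ (i,i) = B $$ (i,i) * B $$ (i,i)" by simp
  qed (use Bc in auto)
  also have "\<dots> = sum_list (map (\<lambda>x. x * x) es)" unfolding dg[symmetric] diag_mat_def
    using Bc by (simp add: sum_list_sum_nth atLeast0LessThan)
  finally show ?thesis using len ev t1 by blast
qed

lemma sq_sum_le:
  fixes xs :: "real list"
  assumes "\<forall>x\<in>set xs. x \<ge> 0"
  shows "sum_list (map (\<lambda>x. x * x) xs) \<le> (sum_list xs)^2"
  using assms
proof (induct xs)
  case (Cons a xs)
  have "0 \<le> sum_list xs" using Cons(2) by (intro sum_list_nonneg) auto
  moreover have "0 \<le> a" using Cons(2) by auto
  ultimately have "0 \<le> a * sum_list xs" by simp
  with Cons show ?case by (simp add: power2_eq_square algebra_simps)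
qed simp

lemma sq_sum_lt:
  fixes xs :: "real list"
  assumes "2 \<le> length xs" "\<forall>x\<in>set xs. x > 0"
  shows "sum_list (map (\<lambda>x. x * x) xs) < (sum_list xs)^2"
proof -
  obtain a b ys where xs: "xs = a # b # ys" using assms(1)
    by (metis One_nat_def Suc_1 length_0_conv length_Cons list.exhaust not_less_eq_eq zero_le)
  have le: "sum_list (map (\<lambda>x. x * x) (b # ys)) \<le> (sum_list (b # ys))^2"
    using assms(2) xs by (intro sq_sum_le) auto
  have "0 \<le> sum_list ys" using assms(2) xs by (intro sum_list_nonneg) auto
  moreover have "0 < a" "0 < b" using assms(2) xs by auto
  ultimately have "0 < a * sum_list (b # ys)" by simp
  with le show ?thesis unfolding xs by (simp add: power2_eq_square algebra_simps)
qed

lemma Re_sum_list: "Re (sum_list xs) = sum_list (map Re xs)"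
  by (induct xs) auto

lemma tr_of_real:
  fixes A :: "real mat"
  assumes "A \<in> carrier_mat n n"
  shows "tr (map_mat complex_of_real A) = complex_of_real (tr A)"
  using assms by (simp add: tr_def)

lemma L1:
  fixes A :: "real mat"
  assumes A: "A \<in> carrier_mat k k" and k: "2 \<le> k"
    and st: "\<forall>z. eigenvalue (map_mat complex_of_real A) z \<longrightarrow> Re z > 0"
    and t1: "tr A = real k" and t2: "tr (A * A) \<ge> (real k)^2"
  shows False
proof -
  define M where "M = map_mat complex_of_real A"
  have M: "M \<in> carrier_mat k k" using A by (simp add: M_def)
  obtain es where len: "length es = k" and ev: "\<forall>e. eigenvalue M e \<longleftrightarrow> e \<in> set es"
    and te: "tr M = sum_list es" and te2: "tr (M * M) = sum_list (map (\<lambda>x. x * x) es)"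
    using eig_list[OF M] by blast
  have MM: "M * M = map_mat complex_of_real (A * A)"
    unfolding M_def using of_real_hom.mat_hom_mult[OF A A] by (rule sym)
  have AA: "A * A \<in> carrier_mat k k" using A by simp
  define xs where "xs = map Re es"
  have s1: "sum_list xs = real k"
    using te tr_of_real[OF A] t1 unfolding M_def xs_def by (metis Re_complex_of_real Re_sum_list)
  have "(real k)^2 \<le> tr (A * A)" by fact
  also have "\<dots> = Re (sum_list (map (\<lambda>x. x * x) es))"
    using te2 tr_of_real[OF AA] MM by (metis Re_complex_of_real)
  also have "\<dots> = sum_list (map (\<lambda>x. Re x * Re x - Im x * Im x) es)"
    by (simp add: Re_sum_list o_def)
  also have "\<dots> \<le> sum_list (map (\<lambda>x. Re x * Re x) es)"
    by (intro sum_list_mono) auto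
  also have "\<dots> = sum_list (map (\<lambda>x. x * x) xs)" by (simp add: xs_def o_def)
  also have "\<dots> < (sum_list xs)^2"
    using len k st ev unfolding xs_def M_def by (intro sq_sum_lt) auto
  finally show False using s1 by simp
qed

lemma shift_eig:
  fixes A :: "real mat"
  assumes A: "A \<in> carrier_mat n n" and t: "t \<noteq> 0"
    and ev: "eigenvalue (map_mat complex_of_real (mat n n (\<lambda>(i,j). (A $$ (i,j) + (if i = j then c else 0)) / t))) \<nu>"
  shows "eigenvalue (map_mat complex_of_real A) (complex_of_real t * \<nu> - complex_of_real c)"
proof -
  let ?D = "map_mat complex_of_real (mat n n (\<lambda>(i,j). (A $$ (i,j) + (if i = j then c else 0)) / t))"
  obtain v where v: "v \<in> carrier_vec n" "v \<noteq> 0\<^sub>v n" and eq: "?D *\<^sub>v v = \<nu> \<cdot>\<^sub>v v"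
    using ev unfolding eigenvalue_def eigenvector_def by auto
  have "map_mat complex_of_real A *\<^sub>v v = (complex_of_real t * \<nu> - complex_of_real c) \<cdot>\<^sub>v v"
  proof (rule eq_vecI)
    fix i assume "i < dim_vec ((complex_of_real t * \<nu> - complex_of_real c) \<cdot>\<^sub>v v)"
    hence i: "i < n" using v by simp
    have "(?D *\<^sub>v v) $ i = (\<Sum>j<n. complex_of_real ((A $$ (i,j) + (if i = j then c else 0)) / t) * v $ j)"
      using i v by (simp add: scalar_prod_def atLeast0LessThan)
    also have "\<dots> = (\<Sum>j<n. (complex_of_real (A $$ (i,j)) * v $ j
          + (if i = j then complex_of_real c * v $ j else 0)) / complex_of_real t)"
      using t by (intro sum.cong) (auto simp: field_simps)
    also have "\<dots> = ((\<Sum>j<n. complex_of_real (A $$ (i,j)) * v $ j)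
          + complex_of_real c * v $ i) / complex_of_real t"
      using i by (simp add: sum_divide_distrib[symmetric] sum.distrib)
    also have "(\<Sum>j<n. complex_of_real (A $$ (i,j)) * v $ j) = (map_mat complex_of_real A *\<^sub>v v) $ i"
      using i v A by (simp add: scalar_prod_def atLeast0LessThan)
    finally have "(map_mat complex_of_real A *\<^sub>v v) $ i / complex_of_real t + complex_of_real c * v $ i / complex_of_real t
        = \<nu> * v $ i" using eq i v by (metis index_smult_vec(1) carrier_vecD add_divide_distrib)
    then show "(map_mat complex_of_real A *\<^sub>v v) $ i = ((complex_of_real t * \<nu> - complex_of_real c) \<cdot>\<^sub>v v) $ i"
      using i v t by (simp add: field_simps)
  qed (use v A in auto)
  then show ?thesis unfolding eigenvalue_def eigenvector_def using v A by auto
qed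

lemma big_eig:
  fixes A :: "real mat"
  assumes A: "A \<in> carrier_mat n n" and n: "0 < n"
    and nn: "\<And>i j. i < n \<Longrightarrow> j < n \<Longrightarrow> A $$ (i,j) \<ge> 0"
    and rs: "\<And>i. i < n \<Longrightarrow> (\<Sum>j<n. A $$ (i,j)) \<ge> r"
    and sr: "s < r" and s0: "0 \<le> s"
  shows "\<exists>z. eigenvalue (map_mat complex_of_real A) z \<and> Re z > s"
proof (rule ccontr)
  let ?Ac = "map_mat complex_of_real A"
  assume "\<not> ?thesis"
  hence H: "\<And>z. eigenvalue ?Ac z \<Longrightarrow> Re z \<le> s" by (auto simp: not_less)
  define s' where "s' = (s + r) / 2"
  have s'1: "s < s'" and s'2: "s' < r" using sr by (auto simp: s'_def)
  have Acc: "?Ac \<in> carrier_mat n n" using A by simp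
  define Spec where "Spec = spectrum ?Ac"
  have fin: "finite Spec" unfolding Spec_def by (rule card_finite_spectrum(1)[OF Acc])
  have "\<forall>\<mu>\<in>Spec. eventually (\<lambda>c. cmod (\<mu> + complex_of_real c) < s' + c) at_top"
  proof
    fix \<mu> assume "\<mu> \<in> Spec"
    hence a: "Re \<mu> \<le> s" using H unfolding Spec_def spectrum_def by auto
    define a where "a = Re \<mu>"
    define b where "b = Im \<mu>"
    have gap: "0 < s' - a" using a s'1 unfolding a_def by simp
    define C where "C = max \<bar>a\<bar> (b^2 / (s' - a))"
    show "eventually (\<lambda>c. cmod (\<mu> + complex_of_real c) < s' + c) at_top"
      using eventually_gt_at_top[of C]
    proof (rule eventually_mono)
      fix c assume c: "C < c"
      have c1: "\<bar>a\<bar> < c" and c2: "b^2 / (s' - a) < c" using c unfolding C_def by auto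
      have b2: "b^2 < c * (s' - a)" using c2 gap by (simp add: divide_less_eq)
      have "(s' - a) * c < (s' - a) * (s' + a + 2*c)"
        using gap c1 s'1 s0 by (intro mult_strict_left_mono) auto
      moreover have eq: "(s'+c)^2 - (a+c)^2 = (s'-a)*(s'+a+2*c)"
        by (simp add: power2_eq_square algebra_simps)
      ultimately have lt: "(a + c)^2 + b^2 < (s' + c)^2" using b2 by (simp add: algebra_simps)
      have "(cmod (\<mu> + complex_of_real c))^2 = (a + c)^2 + b^2"
        by (simp add: cmod_power2 a_def b_def)
      with lt have "(cmod (\<mu> + complex_of_real c))^2 < (s' + c)^2" by simp
      thus "cmod (\<mu> + complex_of_real c) < s' + c"
        by (rule power2_less_imp_less) (use c1 s'1 s0 in auto)
    qed
  qed
  hence ev: "eventually (\<lambda>c. \<forall>\<mu>\<in>Spec. cmod (\<mu> + complex_of_real c) < s' + c) at_top"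
    by (rule eventually_ball_finite[OF fin])
  obtain c where c0: "0 < c" and cS: "\<forall>\<mu>\<in>Spec. cmod (\<mu> + complex_of_real c) < s' + c"
  proof -
    from eventually_conj[OF ev eventually_gt_at_top[of "0::real"]]
    obtain N where "\<forall>x\<ge>N. (\<forall>\<mu>\<in>Spec. cmod (\<mu> + complex_of_real x) < s' + x) \<and> 0 < x"
      by (auto simp: eventually_at_top_linorder)
    thus ?thesis using that by blast
  qed
  define t where "t = s' + c"
  have t0: "0 < t" using c0 s'1 s0 by (simp add: t_def)
  define D where "D = mat n n (\<lambda>(i,j). (A $$ (i,j) + (if i = j then c else 0)) / t)"
  have Dc: "D \<in> carrier_mat n n" by (simp add: D_def)
  have Dij: "\<And>i j. i<n \<Longrightarrow> j<n \<Longrightarrow> D $$ (i,j) = (A $$ (i,j) + (if i = j then c else 0)) / t"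
    by (simp add: D_def)
  have Dnn: "\<And>i j. i<n \<Longrightarrow> j<n \<Longrightarrow> D $$ (i,j) \<ge> 0" using nn c0 t0 by (simp add: Dij)
  define q where "q = (r + c) / t"
  have q1: "1 < q" using s'2 t0 by (simp add: q_def t_def)
  have Drs: "(\<Sum>j<n. D $$ (i,j)) \<ge> q" if i: "i<n" for i
  proof -
    have "(\<Sum>j<n. D $$ (i,j)) = (\<Sum>j<n. (A $$ (i,j) + (if i = j then c else 0))) / t"
      using i by (simp add: Dij sum_divide_distrib[symmetric])
    also have "\<dots> = ((\<Sum>j<n. A $$ (i,j)) + c) / t"
      using i by (simp add: sum.distrib)
    finally show ?thesis using rs[OF i] t0 by (simp add: q_def divide_right_mono)
  qed
  have pw: "(\<forall>i<n. \<forall>j<n. (D ^\<^sub>m m) $$ (i,j) \<ge> 0) \<and> (\<forall>i<n. (\<Sum>j<n. (D ^\<^sub>m m) $$ (i,j)) \<ge> q ^ m)" for m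
  proof (induct m)
    case 0 show ?case using Dc by simp
  next
    case (Suc m)
    have P: "D ^\<^sub>m m \<in> carrier_mat n n" using Dc by simp
    have e: "(D ^\<^sub>m Suc m) $$ (i,j) = (\<Sum>l<n. (D ^\<^sub>m m) $$ (i,l) * D $$ (l,j))" if "i<n" "j<n" for i j
      using P Dc that by (simp add: scalar_prod_def atLeast0LessThan)
    show ?case
    proof (intro conjI allI impI)
      fix i j assume i: "i<n" and j: "j<n"
      show "(D ^\<^sub>m Suc m) $$ (i,j) \<ge> 0" unfolding e[OF i j]
        using Suc Dnn i j by (intro sum_nonneg mult_nonneg_nonneg) auto
    next
      fix i assume i: "i<n"
      have "(\<Sum>j<n. (D ^\<^sub>m Suc m) $$ (i,j)) = (\<Sum>j<n. \<Sum>l<n. (D ^\<^sub>m m) $$ (i,l) * D $$ (l,j))"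
        using e i by simp
      also have "\<dots> = (\<Sum>l<n. (D ^\<^sub>m m) $$ (i,l) * (\<Sum>j<n. D $$ (l,j)))"
        by (subst sum.swap) (simp add: sum_distrib_left)
      also have "\<dots> \<ge> (\<Sum>l<n. (D ^\<^sub>m m) $$ (i,l) * q)"
        using Suc Drs i by (intro sum_mono mult_left_mono) auto
      finally have "(\<Sum>j<n. (D ^\<^sub>m Suc m) $$ (i,j)) \<ge> q * (\<Sum>l<n. (D ^\<^sub>m m) $$ (i,l))"
        by (simp add: sum_distrib_left mult.commute)
      moreover have "q * (\<Sum>l<n. (D ^\<^sub>m m) $$ (i,l)) \<ge> q * q ^ m"
        using Suc i q1 by (intro mult_left_mono) auto
      ultimately show "(\<Sum>j<n. (D ^\<^sub>m Suc m) $$ (i,j)) \<ge> q ^ Suc m" by simp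
    qed
  qed
  have DC: "map_mat complex_of_real D \<in> carrier_mat n n" using Dc by simp
  have sp: "spectral_radius (map_mat complex_of_real D) < 1"
  proof -
    from spectral_radius_mem_max(1)[OF DC n] obtain \<nu> where
      \<nu>: "\<nu> \<in> spectrum (map_mat complex_of_real D)"
      and eq: "spectral_radius (map_mat complex_of_real D) = cmod \<nu>" by auto
    have "eigenvalue ?Ac (complex_of_real t * \<nu> - complex_of_real c)"
      using \<nu> t0 unfolding spectrum_def D_def by (intro shift_eig[OF A]) auto
    hence "(complex_of_real t * \<nu> - complex_of_real c) \<in> Spec" unfolding Spec_def spectrum_def by simp
    from cS[rule_format, OF this] have "cmod (complex_of_real t * \<nu>) < t" by (simp add: t_def)
    hence "t * cmod \<nu> < t * 1" using t0 by (simp add: norm_mult)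
    hence "cmod \<nu> < 1" using t0 by (simp only: mult_less_cancel_left_pos)
    thus ?thesis using eq by simp
  qed
  obtain bnd where nb: "\<And>m. norm_bound (map_mat complex_of_real D ^\<^sub>m m) bnd"
    using spectral_radius_jnf_norm_bound_less_1_upper_triangular[OF DC sp] by blast
  have "q ^ m \<le> real n * bnd" for m
  proof -
    have "q^m \<le> (\<Sum>j<n. (D ^\<^sub>m m) $$ (0,j))" using pw n by auto
    also have "\<dots> \<le> (\<Sum>j<n. bnd)"
    proof (rule sum_mono)
      fix j assume j: "j \<in> {..<n}"
      have "map_mat complex_of_real D ^\<^sub>m m = map_mat complex_of_real (D ^\<^sub>m m)"
        by (rule sym[OF of_real_hom.mat_hom_pow[OF Dc]])
      with nb[of m] have "norm ((map_mat complex_of_real (D ^\<^sub>m m)) $$ (0,j)) \<le> bnd"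
        unfolding norm_bound_def using j n Dc by auto
      thus "(D ^\<^sub>m m) $$ (0,j) \<le> bnd" using j n Dc by simp
    qed
    finally show ?thesis by simp
  qed
  moreover obtain m where "real n * bnd < q ^ m" using real_arch_pow[OF q1] by blast
  ultimately show False by (metis not_less)
qed

lemma L2:
  fixes A :: "real mat"
  assumes A: "A \<in> carrier_mat k k" and k: "0 < k"
    and st: "\<forall>z. eigenvalue (map_mat complex_of_real A) z \<longrightarrow> Re z > 0"
    and nn: "\<And>i j. i < k \<Longrightarrow> j < k \<Longrightarrow> A $$ (i,j) \<ge> 0"
    and rs: "\<And>i. i < k \<Longrightarrow> (\<Sum>j<k. A $$ (i,j)) \<ge> r"
    and t1: "tr A = real k" and kr: "real k < r"
  shows False
proof -
  obtain z where ev: "eigenvalue (map_mat complex_of_real A) z" and gt: "Re z > real k"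
    using big_eig[OF A k nn rs kr] by auto
  define M where "M = map_mat complex_of_real A"
  have M: "M \<in> carrier_mat k k" using A by (simp add: M_def)
  obtain es where evs: "\<forall>e. eigenvalue M e \<longleftrightarrow> e \<in> set es" and te: "tr M = sum_list es"
    using eig_list[OF M] by blast
  have s1: "sum_list (map Re es) = real k"
    using te tr_of_real[OF A] t1 unfolding M_def by (metis Re_complex_of_real Re_sum_list)
  have "Re z \<le> sum_list (map Re es)"
    using ev evs st unfolding M_def by (intro member_le_sum_list) auto
  with gt s1 show False by simp
qed

lemma IW_carrier: "IminusW G \<epsilon> \<delta> \<sigma> \<in> carrier_mat (card \<sigma>) (card \<sigma>)"
  unfolding IminusW_def ctln_sub_def Let_def by (intro minus_carrier_mat) auto

lemma IW_entry:
  assumes fin: "finite \<sigma>" and i: "i < card \<sigma>" and j: "j < card \<sigma>"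
  shows "IminusW G \<epsilon> \<delta> \<sigma> $$ (i,j) = (if i = j then 1 else
           if G (sorted_list_of_set \<sigma> ! j) (sorted_list_of_set \<sigma> ! i) then 1 - \<epsilon> else 1 + \<delta>)"
proof -
  let ?s = "sorted_list_of_set \<sigma>"
  have d: "distinct ?s" and l: "length ?s = card \<sigma>" using fin by auto
  have ne: "i \<noteq> j \<Longrightarrow> ?s ! i \<noteq> ?s ! j" using d l i j by (simp add: nth_eq_iff_index_eq)
  show ?thesis using i j ne
    by (auto simp: IminusW_def ctln_sub_def Let_def ctln_def)
qed

lemma sum_if_const:
  fixes c :: real and k :: nat
  shows "(\<Sum>j<k. if P j then c else 0) = c * real (card {j\<in>{..<k}. P j})"
proof -
  have "(\<Sum>j<k. if P j then c else 0) = (\<Sum>j\<in>{j\<in>{..<k}. P j}. c)"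
    by (rule sum.inter_filter[symmetric]) simp
  thus ?thesis by simp
qed

theorem theorem2:
  fixes n :: nat and G :: "nat \<Rightarrow> nat \<Rightarrow> bool" and \<sigma> :: "nat set"
    and \<epsilon> \<delta> \<theta> :: real
  assumes "simple_digraph n G"
    and "\<sigma> \<subseteq> {1..n}"
    and "\<theta> > 0"
    and "legal_params \<epsilon> \<delta>"
    and "nondegenerate n G \<epsilon> \<delta> \<theta>"
  shows "(\<not> is_clique G \<sigma> \<and>
          \<delta> > \<epsilon> / (1 - \<epsilon>) * (real (card \<sigma>) ^ 2 - real (card \<sigma>) - 1)
          \<longrightarrow> \<not> stable_motif G \<epsilon> \<delta> \<theta> \<sigma>)
       \<and> (\<forall>d. max_in_degree_sub G \<sigma> = d \<and> real d < real (card \<sigma>) - 1 \<and>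
              \<delta> > \<epsilon> * real d / (real (card \<sigma>) - 1 - real d)
              \<longrightarrow> \<not> stable_motif G \<epsilon> \<delta> \<theta> \<sigma>)"
proof -
  have fin: "finite \<sigma>" using assms(2) finite_subset by blast
  define k where "k = card \<sigma>"
  define s where "s = sorted_list_of_set \<sigma>"
  have ds: "distinct s" and ls: "length s = k" and ss: "set s = \<sigma>"
    using fin by (auto simp: s_def k_def)
  define A where "A = IminusW G \<epsilon> \<delta> \<sigma>"
  have Ac: "A \<in> carrier_mat k k" unfolding A_def k_def by (rule IW_carrier)
  define a where "a = (\<lambda>i j. if i = j then 1 else if G (s ! j) (s ! i) then 1 - \<epsilon> else (1 + \<delta> :: real))"
  have Aij: "A $$ (i,j) = a i j" if "i < k" "j < k" for i j
    using IW_entry[OF fin, of i j G \<epsilon> \<delta>] that unfolding A_def a_def s_def k_def by simp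
  have dpos: "\<delta> > 0" and epos: "\<epsilon> > 0" and elt: "\<epsilon> < \<delta> / (\<delta> + 1)"
    using assms(4) unfolding legal_params_def by auto
  have "\<delta> / (\<delta> + 1) < 1" using dpos by simp
  hence e1: "\<epsilon> < 1" using elt by linarith
  have a_ge: "a i j \<ge> 1 - \<epsilon>" for i j using e1 epos dpos unfolding a_def by auto
  have a_nn: "a i j \<ge> 0" for i j using a_ge[of i j] e1 by linarith
  have trA: "tr A = real k"
  proof -
    have "tr A = (\<Sum>i<k. A $$ (i,i))" using Ac by (simp add: tr_def)
    also have "\<dots> = (\<Sum>i<k. 1)" by (intro sum.cong) (auto simp: Aij a_def)
    finally show ?thesis by simp
  qed
  have stab: "\<forall>z. eigenvalue (map_mat complex_of_real A) z \<longrightarrow> Re z > 0"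
    if "stable_motif G \<epsilon> \<delta> \<theta> \<sigma>" using that unfolding stable_motif_def A_def by auto
  have part1: "\<not> stable_motif G \<epsilon> \<delta> \<theta> \<sigma>"
    if nc: "\<not> is_clique G \<sigma>" and hd: "\<delta> > \<epsilon> / (1 - \<epsilon>) * (real k ^ 2 - real k - 1)"
  proof
    assume stm: "stable_motif G \<epsilon> \<delta> \<theta> \<sigma>"
    obtain x y where xy: "x \<in> \<sigma>" "y \<in> \<sigma>" "x \<noteq> y" "\<not> G y x"
      using nc unfolding is_clique_def by blast
    obtain i0 where i0: "i0 < k" "s ! i0 = x" using xy(1) ss ls by (metis in_set_conv_nth)
    obtain j0 where j0: "j0 < k" "s ! j0 = y" using xy(2) ss ls by (metis in_set_conv_nth)
    have ij: "i0 \<noteq> j0" using i0 j0 xy by auto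
    have k2: "2 \<le> k"
    proof -
      have "card {x, y} \<le> card \<sigma>" using xy fin by (intro card_mono) auto
      thus ?thesis using xy unfolding k_def by simp
    qed
    define K where "K = real k"
    define f where "f = (\<lambda>p. a (fst p) (snd p) * a (snd p) (fst p))"
    define b where "b = (\<lambda>p::nat \<times> nat. if fst p = snd p then 1 else 1 - 2 * \<epsilon>)"
    define g where "g = (\<lambda>p. f p - b p)"
    have g0: "g p \<ge> 0" for p
    proof (cases "fst p = snd p")
      case True thus ?thesis by (simp add: g_def f_def b_def a_def)
    next
      case False
      have "(1 - \<epsilon>) * (1 - \<epsilon>) \<le> f p" unfolding f_def
        using a_ge e1 a_nn by (intro mult_mono) auto
      moreover have "1 - 2 * \<epsilon> \<le> (1 - \<epsilon>) * (1 - \<epsilon>)" by (simp add: algebra_simps)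
      ultimately show ?thesis using False by (simp add: g_def b_def)
    qed
    have gi: "g (i0, j0) \<ge> (1 + \<delta>) * (1 - \<epsilon>) - (1 - 2 * \<epsilon>)"
      "g (j0, i0) \<ge> (1 + \<delta>) * (1 - \<epsilon>) - (1 - 2 * \<epsilon>)"
    proof -
      have a1: "a i0 j0 = 1 + \<delta>" using ij i0 j0 xy unfolding a_def by auto
      have "(1 + \<delta>) * (1 - \<epsilon>) \<le> a i0 j0 * a j0 i0" unfolding a1
        using a_ge dpos by (intro mult_left_mono) auto
      thus "g (i0, j0) \<ge> (1 + \<delta>) * (1 - \<epsilon>) - (1 - 2 * \<epsilon>)"
        "g (j0, i0) \<ge> (1 + \<delta>) * (1 - \<epsilon>) - (1 - 2 * \<epsilon>)"
        using ij by (auto simp: g_def f_def b_def mult.commute)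
    qed
    let ?KK = "{..<k} \<times> {..<k}"
    have "tr (A * A) = (\<Sum>i<k. \<Sum>j<k. A $$ (i,j) * A $$ (j,i))"
      using Ac by (simp add: tr_def scalar_prod_def atLeast0LessThan)
    also have "\<dots> = (\<Sum>i<k. \<Sum>j<k. f (i,j))" by (intro sum.cong) (auto simp: Aij f_def)
    also have "\<dots> = sum f ?KK" by (simp add: sum.cartesian_product)
    also have "\<dots> = sum b ?KK + sum g ?KK" by (simp add: g_def sum.distrib[symmetric])
    finally have trAA: "tr (A * A) = sum b ?KK + sum g ?KK" .
    have "sum b ?KK = (\<Sum>i<k. \<Sum>j<k. b (i,j))" by (simp add: sum.cartesian_product)
    also have "\<dots> = (\<Sum>i<k. \<Sum>j<k. (1 - 2 * \<epsilon>) + (if i = j then 2 * \<epsilon> else 0))"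
      by (intro sum.cong) (auto simp: b_def)
    also have "\<dots> = K * (K * (1 - 2 * \<epsilon>) + 2 * \<epsilon>)" by (simp add: sum.distrib K_def)
    finally have sb: "sum b ?KK = K * (K * (1 - 2 * \<epsilon>) + 2 * \<epsilon>)" .
    have "g (i0, j0) + g (j0, i0) = sum g {(i0,j0), (j0,i0)}" using ij by simp
    also have "\<dots> \<le> sum g ?KK" using i0 j0 g0 by (intro sum_mono2) auto
    finally have sg0: "g (i0, j0) + g (j0, i0) \<le> sum g ?KK" .
    have sg: "sum g ?KK \<ge> 2 * ((1 + \<delta>) * (1 - \<epsilon>) - (1 - 2 * \<epsilon>))"
    proof -
      define X where "X = (1 + \<delta>) * (1 - \<epsilon>) - (1 - 2 * \<epsilon>)"
      have "X \<le> g (i0, j0)" "X \<le> g (j0, i0)" using gi unfolding X_def by auto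
      with sg0 have "2 * X \<le> sum g ?KK" by linarith
      thus ?thesis unfolding X_def .
    qed
    have "\<epsilon> / (1 - \<epsilon>) * (K ^ 2 - K - 1) * (1 - \<epsilon>) < \<delta> * (1 - \<epsilon>)"
      using hd e1 unfolding K_def by (intro mult_strict_right_mono) auto
    hence hd2: "\<epsilon> * (K * K - K - 1) < \<delta> * (1 - \<epsilon>)" using e1 by (simp add: power2_eq_square)
    have "K^2 \<le> tr (A * A)" using trAA sb sg hd2 by (simp add: power2_eq_square algebra_simps)
    thus False using L1[OF Ac k2 stab[OF stm] trA] unfolding K_def by simp
  qed
  have part2: "\<not> stable_motif G \<epsilon> \<delta> \<theta> \<sigma>"
    if dd: "max_in_degree_sub G \<sigma> = d" and dk: "real d < real k - 1"
      and hd: "\<delta> > \<epsilon> * real d / (real k - 1 - real d)" for d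
  proof
    assume stm: "stable_motif G \<epsilon> \<delta> \<theta> \<sigma>"
    have k0: "0 < k" using dk by simp
    define r where "r = real k * (1 + \<delta>) - \<delta> - (\<epsilon> + \<delta>) * real d"
    have nn: "A $$ (i,j) \<ge> 0" if "i < k" "j < k" for i j
      using that a_ge[of i j] e1 by (simp add: Aij)
    have rs: "(\<Sum>j<k. A $$ (i,j)) \<ge> r" if i: "i < k" for i
    proof -
      let ?P = "\<lambda>j. j \<noteq> i \<and> G (s ! j) (s ! i)"
      have "(\<Sum>j<k. A $$ (i,j)) = (\<Sum>j<k. (1 + \<delta>) - (if j = i then \<delta> else 0) - (if ?P j then \<epsilon> + \<delta> else 0))"
        using i by (intro sum.cong) (auto simp: Aij a_def)
      also have "\<dots> = real k * (1 + \<delta>) - \<delta> - (\<epsilon> + \<delta>) * real (card {j\<in>{..<k}. ?P j})"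
      proof -
        have e1: "(\<Sum>j<k. (1 + \<delta>) - (if j = i then \<delta> else 0) - (if ?P j then \<epsilon> + \<delta> else 0))
           = (\<Sum>j<k. (1 + \<delta>)) - (\<Sum>j<k. if j = i then \<delta> else 0) - (\<Sum>j<k. if ?P j then \<epsilon> + \<delta> else 0)"
          by (simp only: sum_subtractf)
        have e2: "(\<Sum>j<k. if j = i then \<delta> else 0) = \<delta>" using i by simp
        have e3: "(\<Sum>j<k. if ?P j then \<epsilon> + \<delta> else 0) = (\<epsilon> + \<delta>) * real (card {j\<in>{..<k}. ?P j})"
          by (rule sum_if_const)
        show ?thesis unfolding e1 e2 e3 by simp
      qed
      finally have eq: "(\<Sum>j<k. A $$ (i,j)) = real k * (1 + \<delta>) - \<delta> - (\<epsilon> + \<delta>) * real (card {j\<in>{..<k}. ?P j})" .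
      have img: "(\<lambda>j. s ! j) ` {j\<in>{..<k}. ?P j} = {x \<in> \<sigma>. x \<noteq> s ! i \<and> G x (s ! i)}"
      proof
        show "(\<lambda>j. s ! j) ` {j\<in>{..<k}. ?P j} \<subseteq> {x \<in> \<sigma>. x \<noteq> s ! i \<and> G x (s ! i)}"
          using ds ls ss i by (auto simp: nth_eq_iff_index_eq)
        show "{x \<in> \<sigma>. x \<noteq> s ! i \<and> G x (s ! i)} \<subseteq> (\<lambda>j. s ! j) ` {j\<in>{..<k}. ?P j}"
        proof
          fix x assume x: "x \<in> {x \<in> \<sigma>. x \<noteq> s ! i \<and> G x (s ! i)}"
          then obtain j where j: "j < k" "s ! j = x" using ss ls by (metis (no_types, lifting) in_set_conv_nth mem_Collect_eq)
          thus "x \<in> (\<lambda>j. s ! j) ` {j\<in>{..<k}. ?P j}" using x by auto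
        qed
      qed
      have inj: "inj_on (\<lambda>j. s ! j) {j\<in>{..<k}. ?P j}"
        using ds ls by (intro inj_on_nth) auto
      have "card {j\<in>{..<k}. ?P j} = in_degree_sub G \<sigma> (s ! i)"
        using card_image[OF inj] img unfolding in_degree_sub_def by simp
      also have "\<dots> \<le> d" unfolding dd[symmetric] max_in_degree_sub_def
        using fin i ss ls by (intro Max_ge) auto
      finally have "real (card {j\<in>{..<k}. ?P j}) \<le> real d" by simp
      hence "(\<epsilon> + \<delta>) * real (card {j\<in>{..<k}. ?P j}) \<le> (\<epsilon> + \<delta>) * real d"
        using epos dpos by (intro mult_left_mono) auto
      thus ?thesis unfolding eq r_def by linarith
    qed
    have "\<epsilon> * real d / (real k - 1 - real d) * (real k - 1 - real d) < \<delta> * (real k - 1 - real d)"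
      using hd dk by (intro mult_strict_right_mono) auto
    hence "\<epsilon> * real d < \<delta> * (real k - 1 - real d)" using dk by simp
    hence kr: "real k < r" unfolding r_def by (simp add: algebra_simps)
    show False using L2[OF Ac k0 stab[OF stm] nn rs trA kr] .
  qed
  show ?thesis using part1 part2 unfolding k_def by blast
qed

end
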